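(* For every ordinal $\beta$ with $1\leq\beta\leq\omega_1$, state bisimilarity $\sim_s$ on $\mathbb{S}(\beta)$ is the identity relation on $I\times\beta$.
   Context: An LMP is $(S,\Sigma,\{\tau_a\}_{a\in L})$ with $L$ countable and Markov kernels $\tau_a$ (subprobability measures in the second argument, measurable in the first). For a relation $R$, $\Sigma(R)$ = $R$-closed members of $\Sigma$ ($A$ is $R$-closed if $x\in A$, $xRs\Rightarrow s\in A$). A state bisimulation is a symmetric relation $R$ such that $sRt$ and $C\in\Sigma(R)$ imply $\tau_a(s,C)=\tau_a(t,C)$ for all $a$; $\sim_s$ is the union of all state bisimulations. The processes $\mathbb{S}(\beta)$: $I=(0,1)$, $\mathfrak{m}$ Lebesgue measure, $V\subseteq I$ Lebesgue nonmeasurable, $\mathcal{B}_V=\sigma(\mathcal{B}(I)\cup\{V\})$, and $\mathfrak{m}_0,\mathfrak{m}_1$ measures on $\mathcal{B}_V$ extending $\mathfrak{m}$ with $\mathfrak{m}_0(V)\neq\mathfrak{m}_1(V)$. Let $\{q_n\}_{n\in\omega}$ enumerate $\mathbb{Q}\cap I$. For ordinals $\eta$: $\alpha_n(0)=0$, $\alpha_n(\zeta+1)=\zeta$ for all $n$, and for limit $\lambda$, $(\alpha_n(\lambda))_{n\in\omega}$ is a fixed strictly increasing sequence of nonzero ordinals below $\lambda$ cofinal in $\lambda$. For an ordinal $\beta\leq\omega_1$, $\mathbb{S}(\beta)=(I\times\beta,\ \mathcal{B}_V\otimes\mathcal{P}(\beta),\ \{\tau_n\}_{n\in\omega})$ with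 $\tau_n((x,\eta),A)=x\cdot\mathfrak{m}_0(A_0)$ if $\eta=0$; $=\mathfrak{m}_0(A_{\alpha_n(\eta)})$ if $\eta>0$ and $x<q_n$; $=\mathfrak{m}_1(A_{\alpha_n(\eta)})$ if $\eta>0$ and $x\geq q_n$; here $A_\gamma=\{r:(r,\gamma)\in A\}$. These $\tau_n$ are Markov kernels, so $\mathbb{S}(\beta)$ is an LMP. *)

theory Defs
  imports "HOL-Analysis.Analysis"
begin

text \<open>An LMP is given by a state set S, a sigma-algebra Sigma on S, and kernels
  tau a s C (the subprobability of reaching C from s under label a).\<close>

definition R_closed :: "('s \<times> 's) set \<Rightarrow> 's set \<Rightarrow> bool" where
  "R_closed R A \<longleftrightarrow> (\<forall>x s. x \<in> A \<longrightarrow> (x, s) \<in> R \<longrightarrow> s \<in> A)"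

definition state_bisimulation ::
  "'s set \<Rightarrow> 's set set \<Rightarrow> ('l \<Rightarrow> 's \<Rightarrow> 's set \<Rightarrow> real) \<Rightarrow> ('s \<times> 's) set \<Rightarrow> bool" where
  "state_bisimulation S \<Sigma> \<tau> R \<longleftrightarrow> R \<subseteq> S \<times> S \<and> sym R \<and>
     (\<forall>s t C a. (s, t) \<in> R \<longrightarrow> C \<in> \<Sigma> \<longrightarrow> R_closed R C \<longrightarrow> \<tau> a s C = \<tau> a t C)"

definition state_bisimilarity ::
  "'s set \<Rightarrow> 's set set \<Rightarrow> ('l \<Rightarrow> 's \<Rightarrow> 's set \<Rightarrow> real) \<Rightarrow> ('s \<times> 's) set" where
  "state_bisimilarity S \<Sigma> \<tau> = \<Union>{R. state_bisimulation S \<Sigma> \<tau> R}"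

definition ozero :: "'o::wellorder" where
  "ozero = (LEAST x. True)"

definition is_succ_of :: "'o::wellorder \<Rightarrow> 'o \<Rightarrow> bool" where
  "is_succ_of \<eta> \<zeta> \<longleftrightarrow> \<zeta> < \<eta> \<and> (\<forall>\<xi>. \<not> (\<zeta> < \<xi> \<and> \<xi> < \<eta>))"

definition is_limit :: "'o::wellorder \<Rightarrow> bool" where
  "is_limit \<eta> \<longleftrightarrow> \<eta> \<noteq> ozero \<and> \<not> (\<exists>\<zeta>. is_succ_of \<eta> \<zeta>)"

text \<open>B represents an ordinal beta with 1 \<le> beta \<le> omega_1: a nonempty initial
  segment of a well-ordered type all of whose proper initial segments are countable.\<close>
definition ordinal_1_to_omega1 :: "'o::wellorder set \<Rightarrow> bool" where
  "ordinal_1_to_omega1 B \<longleftrightarrow> B \<noteq> {} \<and> (\<forall>\<eta>\<in>B. \<forall>\<zeta>. \<zeta> < \<eta> \<longrightarrow> \<zeta> \<in> B) \<and>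
     (\<forall>\<eta>\<in>B. countable {\<zeta>. \<zeta> < \<eta>})"

definition alpha_system :: "'o::wellorder set \<Rightarrow> (nat \<Rightarrow> 'o \<Rightarrow> 'o) \<Rightarrow> bool" where
  "alpha_system B \<alpha> \<longleftrightarrow>
     (\<forall>n. \<alpha> n ozero = ozero) \<and>
     (\<forall>\<eta>\<in>B. \<forall>\<zeta> n. is_succ_of \<eta> \<zeta> \<longrightarrow> \<alpha> n \<eta> = \<zeta>) \<and>
     (\<forall>l\<in>B. is_limit l \<longrightarrow>
        strict_mono (\<lambda>n. \<alpha> n l) \<and> (\<forall>n. \<alpha> n l \<noteq> ozero \<and> \<alpha> n l < l) \<and>
        (\<forall>\<zeta>. \<zeta> < l \<longrightarrow> (\<exists>n. \<zeta> \<le> \<alpha> n l)))"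

definition I_set :: "real set" where
  "I_set = {0<..<1}"

definition BV_space :: "real set \<Rightarrow> real measure" where
  "BV_space V = sigma I_set (sets (restrict_space borel I_set) \<union> {V})"

definition sect :: "(real \<times> 'o) set \<Rightarrow> 'o \<Rightarrow> real set" where
  "sect A \<gamma> = {r. (r, \<gamma>) \<in> A}"

definition tauS ::
  "real measure \<Rightarrow> real measure \<Rightarrow> (nat \<Rightarrow> real) \<Rightarrow> (nat \<Rightarrow> 'o::wellorder \<Rightarrow> 'o)
     \<Rightarrow> nat \<Rightarrow> real \<times> 'o \<Rightarrow> (real \<times> 'o) set \<Rightarrow> real" where
  "tauS m0 m1 q \<alpha> n s A =
     (let x = fst s; \<eta> = snd s in
      if \<eta> = ozero then x * measure m0 (sect A ozero)
      else if x < q n then measure m0 (sect A (\<alpha> n \<eta>))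
      else measure m1 (sect A (\<alpha> n \<eta>)))"

end

theory Submission
  imports Defs
begin

lemma ozero_le: "ozero \<le> (x::'o::wellorder)"
  unfolding ozero_def by (rule Least_le) simp

lemma succ_unique:
  fixes a b c :: "'o::wellorder"
  assumes "is_succ_of a c" "is_succ_of b c" shows "a = b"
  using assms unfolding is_succ_of_def by (metis linorder_neqE)

lemma alpha_less:
  assumes "alpha_system B \<alpha>" "\<eta> \<in> B" "\<eta> \<noteq> ozero"
  shows "\<alpha> n \<eta> < \<eta>"
proof (cases "is_limit \<eta>")
  case True then show ?thesis using assms unfolding alpha_system_def by blast
next
  case False
  then obtain z where z: "is_succ_of \<eta> z" using assms(3) unfolding is_limit_def by blast
  then have "\<alpha> n \<eta> = z" using assms unfolding alpha_system_def by blast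
  then show ?thesis using z unfolding is_succ_of_def by simp
qed

lemma alpha_inj_aux:
  assumes A: "alpha_system B \<alpha>" and "\<zeta> \<in> B" "\<delta> \<in> B" "\<zeta> \<noteq> ozero" "\<delta> \<noteq> ozero"
    and eq: "\<forall>n. \<alpha> n \<zeta> = \<alpha> n \<delta>" and d: "is_succ_of \<delta> d"
  shows "\<zeta> = \<delta>"
proof -
  have ad: "\<And>n. \<alpha> n \<delta> = d" using A assms(3) d unfolding alpha_system_def by blast
  show ?thesis
  proof (cases "is_limit \<zeta>")
    case True
    then have "strict_mono (\<lambda>n. \<alpha> n \<zeta>)" using A assms(2) unfolding alpha_system_def by blast
    then have "\<alpha> 0 \<zeta> < \<alpha> 1 \<zeta>" by (simp add: strict_mono_def)
    then show ?thesis using eq ad by simp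
  next
    case False
    then obtain z where z: "is_succ_of \<zeta> z" using assms(4) unfolding is_limit_def by blast
    then have "\<alpha> 0 \<zeta> = z" using A assms(2) unfolding alpha_system_def by blast
    then have "z = d" using eq ad by metis
    then show ?thesis using succ_unique z d by metis
  qed
qed

lemma alpha_inj:
  assumes A: "alpha_system B \<alpha>" and "\<zeta> \<in> B" "\<delta> \<in> B" "\<zeta> \<noteq> ozero" "\<delta> \<noteq> ozero"
    and eq: "\<forall>n. \<alpha> n \<zeta> = \<alpha> n \<delta>"
  shows "\<zeta> = \<delta>"
proof (cases "\<exists>d. is_succ_of \<delta> d")
  case True then show ?thesis using alpha_inj_aux[OF assms] by blast
next
  case False
  note F = False
  show ?thesis
  proof (cases "\<exists>d. is_succ_of \<zeta> d")
    case True then show ?thesis using alpha_inj_aux[OF A assms(3,2,5,4)] eq by metis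
  next
    case False
    have lz: "is_limit \<zeta>" and ld: "is_limit \<delta>" using F False assms(4,5) unfolding is_limit_def by auto
    have cz: "\<forall>n. \<alpha> n \<zeta> < \<zeta>" and cfz: "\<forall>x. x < \<zeta> \<longrightarrow> (\<exists>n. x \<le> \<alpha> n \<zeta>)"
      using A assms(2) lz unfolding alpha_system_def by blast+
    have cd: "\<forall>n. \<alpha> n \<delta> < \<delta>" and cfd: "\<forall>x. x < \<delta> \<longrightarrow> (\<exists>n. x \<le> \<alpha> n \<delta>)"
      using A assms(3) ld unfolding alpha_system_def by blast+
    show ?thesis
    proof (rule ccontr)
      assume "\<zeta> \<noteq> \<delta>"
      then consider "\<zeta> < \<delta>" | "\<delta> < \<zeta>" by (meson linorder_neqE)
      then show False
      proof cases
        case 1 then obtain n where "\<zeta> \<le> \<alpha> n \<delta>" using cfd by blast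
        then show False using cz eq by (metis leD)
      next
        case 2 then obtain n where "\<delta> \<le> \<alpha> n \<zeta>" using cfz by blast
        then show False using cd eq by (metis leD)
      qed
    qed
  qed
qed

theorem lemma5p3:
  fixes V :: "real set" and m0 m1 :: "real measure" and q :: "nat \<Rightarrow> real"
    and B :: "'o::wellorder set" and \<alpha> :: "nat \<Rightarrow> 'o \<Rightarrow> 'o"
  assumes "V \<subseteq> I_set" and "V \<notin> sets lebesgue"
    and "sets m0 = sets (BV_space V)" and "sets m1 = sets (BV_space V)"
    and "\<forall>A \<in> sets (restrict_space borel I_set). emeasure m0 A = emeasure lborel A"
    and "\<forall>A \<in> sets (restrict_space borel I_set). emeasure m1 A = emeasure lborel A"
    and "emeasure m0 V \<noteq> emeasure m1 V"
    and "bij_betw q UNIV (\<rat> \<inter> I_set)"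
    and "ordinal_1_to_omega1 B"
    and "alpha_system B \<alpha>"
  shows "state_bisimilarity (I_set \<times> B) (sets (BV_space V \<Otimes>\<^sub>M count_space B)) (tauS m0 m1 q \<alpha>)
           = Id_on (I_set \<times> B)"
proof -
  define S where "S = I_set \<times> B"
  define \<Sigma> where "\<Sigma> = sets (BV_space V \<Otimes>\<^sub>M count_space B)"
  define \<tau> where "\<tau> = tauS m0 m1 q \<alpha>"
  have Bdown: "\<And>\<eta> \<zeta>. \<eta> \<in> B \<Longrightarrow> \<zeta> < \<eta> \<Longrightarrow> \<zeta> \<in> B"
    using assms(9) unfolding ordinal_1_to_omega1_def by blast
  have oB: "ozero \<in> B"
  proof -
    obtain b where "b \<in> B" using assms(9) unfolding ordinal_1_to_omega1_def by blast
    then show ?thesis using Bdown ozero_le by (metis order.not_eq_order_implies_strict)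
  qed
  have Isub: "sets (restrict_space borel I_set) \<subseteq> Pow I_set"
    using sets.space_closed[of "restrict_space borel I_set"] by (simp add: space_restrict_space)
  have setsBV: "sets (BV_space V) = sigma_sets I_set (sets (restrict_space borel I_set) \<union> {V})"
    unfolding BV_space_def using Isub assms(1) by (intro sets_measure_of) auto
  have spBV: "space (BV_space V) = I_set"
    unfolding BV_space_def using Isub assms(1) by (intro space_measure_of) auto
  have VBV: "V \<in> sets (BV_space V)" unfolding setsBV by (auto intro: sigma_sets.Basic)
  have IBV: "I_set \<in> sets (BV_space V)" using sets.top[of "BV_space V"] spBV by simp
  have Ir: "I_set \<in> sets (restrict_space borel I_set)"
    using sets.top[of "restrict_space borel I_set"] by (simp add: space_restrict_space)
  have lebI: "emeasure lborel I_set = 1" unfolding I_set_def by simp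
  have sp0: "space m0 = I_set" using sets_eq_imp_space_eq[OF assms(3)] spBV by simp
  have sp1: "space m1 = I_set" using sets_eq_imp_space_eq[OF assms(4)] spBV by simp
  have e0: "emeasure m0 I_set = 1" using assms(5) Ir lebI by simp
  have e1: "emeasure m1 I_set = 1" using assms(6) Ir lebI by simp
  interpret f0: finite_measure m0 by (rule finite_measureI) (simp add: sp0 e0)
  interpret f1: finite_measure m1 by (rule finite_measureI) (simp add: sp1 e1)
  have M0I: "measure m0 I_set = 1" using e0 f0.emeasure_eq_measure by simp
  have M1I: "measure m1 I_set = 1" using e1 f1.emeasure_eq_measure by simp
  have MV: "measure m0 V \<noteq> measure m1 V"
    using assms(7) f0.emeasure_eq_measure f1.emeasure_eq_measure by metis
  have rect: "\<And>X \<gamma>. X \<in> sets (BV_space V) \<Longrightarrow> \<gamma> \<in> B \<Longrightarrow> X \<times> {\<gamma>} \<in> \<Sigma>"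
    unfolding \<Sigma>_def by (rule pair_measureI) auto
  have SS: "S \<in> \<Sigma>" unfolding \<Sigma>_def S_def
    using sets.top[of "BV_space V \<Otimes>\<^sub>M count_space B"]
    by (simp add: space_pair_measure spBV)
  have sectR: "\<And>X \<gamma> \<gamma>'. sect (X \<times> {\<gamma>}) \<gamma>' = (if \<gamma>' = \<gamma> then X else {})"
    unfolding sect_def by auto
  have sectS: "\<And>\<gamma>. \<gamma> \<in> B \<Longrightarrow> sect S \<gamma> = I_set" unfolding sect_def S_def by auto
  have tau_def': "\<And>n x \<eta> A. \<tau> n (x, \<eta>) A = (if \<eta> = ozero then x * measure m0 (sect A ozero)
      else if x < q n then measure m0 (sect A (\<alpha> n \<eta>)) else measure m1 (sect A (\<alpha> n \<eta>)))"
    unfolding \<tau>_def tauS_def Let_def by simp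
  have alB: "\<And>n \<eta>. \<eta> \<in> B \<Longrightarrow> \<eta> \<noteq> ozero \<Longrightarrow> \<alpha> n \<eta> \<in> B \<and> \<alpha> n \<eta> < \<eta>"
    using alpha_less[OF assms(10)] Bdown by blast
  have Id_bis: "state_bisimulation S \<Sigma> \<tau> (Id_on S)"
    unfolding state_bisimulation_def by (auto simp: sym_def)
  have main: "R \<subseteq> Id_on S" if bis: "state_bisimulation S \<Sigma> \<tau> R" for R
  proof -
    have RS: "R \<subseteq> S \<times> S" and symR: "sym R"
      and key: "\<And>s t C a. (s, t) \<in> R \<Longrightarrow> C \<in> \<Sigma> \<Longrightarrow> R_closed R C \<Longrightarrow> \<tau> a s C = \<tau> a t C"
      using bis unfolding state_bisimulation_def by blast+
    have Scl: "R_closed R S" using RS unfolding R_closed_def by blast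
    have L0: "t = (x, ozero)" if r: "((x, ozero), t) \<in> R" for x t
    proof -
      obtain y \<zeta> where t: "t = (y, \<zeta>)" by (cases t)
      have xI: "x \<in> I_set" and yI: "y \<in> I_set" and zB: "\<zeta> \<in> B"
        using r RS t unfolding S_def by auto
      have eq: "\<tau> 0 (x, ozero) S = \<tau> 0 (y, \<zeta>) S" using key[OF r SS Scl] t by simp
      have lhs: "\<tau> 0 (x, ozero) S = x" using tau_def' sectS[OF oB] M0I by simp
      show ?thesis
      proof (cases "\<zeta> = ozero")
        case True
        then have "\<tau> 0 (y, \<zeta>) S = y" using tau_def' sectS[OF oB] M0I by simp
        then show ?thesis using eq lhs t True by simp
      next
        case False
        then have "\<tau> 0 (y, \<zeta>) S = 1" using tau_def' sectS alB[OF zB False] M0I M1I by simp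
        then have "x = 1" using eq lhs by simp
        then show ?thesis using xI unfolding I_set_def by simp
      qed
    qed
    have lev: "\<delta> \<in> B \<longrightarrow> (\<forall>x t. ((x, \<delta>), t) \<in> R \<longrightarrow> t = (x, \<delta>))" for \<delta>
    proof (induction \<delta> rule: less_induct)
      case (less \<delta>)
      show ?case
      proof (intro impI allI)
        fix x t assume dB: "\<delta> \<in> B" and r: "((x, \<delta>), t) \<in> R"
        show "t = (x, \<delta>)"
        proof (cases "\<delta> = ozero")
          case True then show ?thesis using L0 r by simp
        next
          case dnz: False
          obtain y \<zeta> where t: "t = (y, \<zeta>)" by (cases t)
          have xI: "x \<in> I_set" and yI: "y \<in> I_set" and zB: "\<zeta> \<in> B"
            using r RS t unfolding S_def by auto
          have znz: "\<zeta> \<noteq> ozero"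
          proof
            assume "\<zeta> = ozero"
            then have "((y, ozero), (x, \<delta>)) \<in> R" using r t symR by (simp add: sym_def)
            then show False using L0 dnz by blast
          qed
          have cl: "R_closed R (X \<times> {\<gamma>})" if "\<gamma> < \<delta>" for X \<gamma>
          proof -
            have "\<gamma> \<in> B" using Bdown dB that by blast
            then have "\<forall>x t. ((x, \<gamma>), t) \<in> R \<longrightarrow> t = (x, \<gamma>)" using less that by blast
            then show ?thesis unfolding R_closed_def by auto
          qed
          have aeq: "\<alpha> n \<zeta> = \<alpha> n \<delta>" for n
          proof -
            define \<gamma> where "\<gamma> = \<alpha> n \<delta>"
            have g: "\<gamma> \<in> B" "\<gamma> < \<delta>" using alB[OF dB dnz] \<gamma>_def by auto
            have "\<tau> n (x, \<delta>) (I_set \<times> {\<gamma>}) = \<tau> n (y, \<zeta>) (I_set \<times> {\<gamma>})"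
              using key[OF r rect[OF IBV g(1)] cl[OF g(2)]] t by simp
            moreover have "\<tau> n (x, \<delta>) (I_set \<times> {\<gamma>}) = 1"
              using dnz M0I M1I by (simp add: tau_def' sectR \<gamma>_def)
            moreover have "\<alpha> n \<zeta> \<noteq> \<gamma> \<Longrightarrow> \<tau> n (y, \<zeta>) (I_set \<times> {\<gamma>}) = 0"
              using znz by (simp add: tau_def' sectR)
            ultimately show ?thesis using \<gamma>_def by fastforce
          qed
          have zd: "\<zeta> = \<delta>" using alpha_inj[OF assms(10) zB dB znz dnz] aeq by blast
          have qeq: "x < q n \<longleftrightarrow> y < q n" for n
          proof -
            define \<gamma> where "\<gamma> = \<alpha> n \<delta>"
            have g: "\<gamma> \<in> B" "\<gamma> < \<delta>" using alB[OF dB dnz] \<gamma>_def by auto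
            have "\<tau> n (x, \<delta>) (V \<times> {\<gamma>}) = \<tau> n (y, \<delta>) (V \<times> {\<gamma>})"
              using key[OF r rect[OF VBV g(1)] cl[OF g(2)]] t zd by simp
            moreover have "\<And>z. \<tau> n (z, \<delta>) (V \<times> {\<gamma>}) = (if z < q n then measure m0 V else measure m1 V)"
              using dnz by (simp add: tau_def' sectR \<gamma>_def)
            ultimately show ?thesis using MV by (auto split: if_splits)
          qed
          have "x = y"
          proof (rule ccontr)
            assume "x \<noteq> y"
            then consider "x < y" | "y < x" by linarith
            then show False
            proof cases
              case 1
              then obtain r where r: "r \<in> \<rat>" "x < r" "r < y" using Rats_dense_in_real by blast
              then have "r \<in> \<rat> \<inter> I_set" using xI yI unfolding I_set_def by auto
              then obtain n where "q n = r" using assms(8) unfolding bij_betw_def by (metis imageE)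
              then show False using qeq[of n] r by auto
            next
              case 2
              then obtain r where r: "r \<in> \<rat>" "y < r" "r < x" using Rats_dense_in_real by blast
              then have "r \<in> \<rat> \<inter> I_set" using xI yI unfolding I_set_def by auto
              then obtain n where "q n = r" using assms(8) unfolding bij_betw_def by (metis imageE)
              then show False using qeq[of n] r by auto
            qed
          qed
          then show ?thesis using t zd by simp
        qed
      qed
    qed
    show ?thesis
    proof
      fix p assume p: "p \<in> R"
      obtain s t where st: "p = (s, t)" by (cases p)
      obtain x \<delta> where s: "s = (x, \<delta>)" by (cases s)
      have "s \<in> S" "\<delta> \<in> B" using p st s RS unfolding S_def by auto
      moreover have "t = s" using lev[of \<delta>] p st s \<open>\<delta> \<in> B\<close> by blast
      ultimately show "p \<in> Id_on S" using st by (simp add: Id_on_iff)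
    qed
  qed
  have "state_bisimilarity S \<Sigma> \<tau> = Id_on S"
    unfolding state_bisimilarity_def using main Id_bis by blast
  then show ?thesis unfolding S_def \<Sigma>_def \<tau>_def .
qed

end
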